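(* For any natural number $i$, there is a symmetric positive definite $m\times m$ matrix $G_i$ such that (i) $G_i^{-1}g_i=\theta\tau_i\widehat{S}^{-1}g_i$, where $g_i=B^{T}x_{i+1}-Dy_i-g$ and $\tau_i=\frac{\langle g_i,\widehat S^{-1}g_i\rangle}{\langle (B^TA_s^{-1}B+D)\widehat S^{-1}g_i,\widehat S^{-1}g_i\rangle}$ if $g_i\neq 0$, $\tau_i=1$ if $g_i=0$; (ii) all eigenvalues of the matrix $G_i^{-1}H$ lie in the interval $[\theta(1-\beta_1),\theta(1+\beta_1)]$.
   Context: Consider the generalized saddle point system $\begin{bmatrix} A & B\\ B^{T} & -D\end{bmatrix}\begin{bmatrix} x\\ y\end{bmatrix}=\begin{bmatrix} f\\ g\end{bmatrix}$, where $A$ is an $n\times n$ (possibly nonsymmetric) invertible matrix whose symmetric part $A_s=\frac12(A+A^T)$ is positive definite, $B$ is an $n\times m$ matrix with $m\le n$, and $D$ is symmetric positive semidefinite; the Schur complement $B^TA^{-1}B+D$ is assumed nonsingular. Let $H=B^TA_s^{-1}B+D$ (assumed symmetric positive definite), let $\widehat S$ be a symmetric positive definite preconditioner for $H$, let $\kappa_1=\mathrm{cond}(\widehat S^{-1}H)$ and $\beta_1=\frac{\kappa_1-1}{\kappa_1+1}$, and let $\theta>0$. The iterates $(x_i,y_i)$ are those of the preconditioned exact Uzawa method: given $x_0,y_0$, for $i=0,1,2,\dots$, $x_{i+1}=x_i+A^{-1}(f-(Ax_i+By_i))$, $y_{i+1}=y_i+\theta\tau_i\widehat S^{-1}(B^Tx_{i+1}-Dy_i-g)$,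 with $\tau_i$ as defined in the claim (this choice minimizes $\|\tau_i\widehat S^{-1}g_i-H^{-1}g_i\|_H^2$). *)

theory Defs
  imports "HOL-Analysis.Analysis"
begin

definition sym_part :: "real^'n^'n \<Rightarrow> real^'n^'n" where
  "sym_part A = (1/2) *\<^sub>R (A + transpose A)"

definition pos_def :: "real^'n^'n \<Rightarrow> bool" where
  "pos_def M \<longleftrightarrow> (\<forall>x. x \<noteq> 0 \<longrightarrow> 0 < x \<bullet> (M *v x))"

definition pos_semidef :: "real^'n^'n \<Rightarrow> bool" where
  "pos_semidef M \<longleftrightarrow> (\<forall>x. 0 \<le> x \<bullet> (M *v x))"

definition real_eigenvalue :: "real^'n^'n \<Rightarrow> real \<Rightarrow> bool" where
  "real_eigenvalue M l \<longleftrightarrow> (\<exists>v. v \<noteq> 0 \<and> M *v v = l *\<^sub>R v)"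

definition complex_eigenvalue :: "real^'n^'n \<Rightarrow> complex \<Rightarrow> bool" where
  "complex_eigenvalue M l \<longleftrightarrow>
     (\<exists>v :: complex^'n. v \<noteq> 0 \<and>
        (\<chi> i. \<Sum>j\<in>UNIV. complex_of_real (M $ i $ j) * v $ j) = (\<chi> i. l * v $ i))"

text \<open>Spectral condition number (ratio of largest to smallest eigenvalue), used
  for matrices with real positive spectrum such as inverse(S) H with S, H SPD.\<close>
definition spec_cond :: "real^'n^'n \<Rightarrow> real" where
  "spec_cond M = Max {l. real_eigenvalue M l} / Min {l. real_eigenvalue M l}"

definition Hmat :: "real^'n^'n \<Rightarrow> real^'m^'n \<Rightarrow> real^'m^'m \<Rightarrow> real^'m^'m" where
  "Hmat A B D = transpose B ** matrix_inv (sym_part A) ** B + D"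

definition tau :: "real^'m^'m \<Rightarrow> real^'m^'m \<Rightarrow> real^'m \<Rightarrow> real" where
  "tau H S gi = (if gi = 0 then 1 else
      (gi \<bullet> (matrix_inv S *v gi)) / ((H *v (matrix_inv S *v gi)) \<bullet> (matrix_inv S *v gi)))"

primrec uzawa :: "real^'n^'n \<Rightarrow> real^'m^'n \<Rightarrow> real^'m^'m \<Rightarrow> real^'m^'m \<Rightarrow> real
    \<Rightarrow> real^'n \<Rightarrow> real^'m \<Rightarrow> real^'n \<Rightarrow> real^'m \<Rightarrow> nat \<Rightarrow> (real^'n) \<times> (real^'m)" where
  "uzawa A B D S \<theta> f g x0 y0 0 = (x0, y0)"
| "uzawa A B D S \<theta> f g x0 y0 (Suc i) =
    (let x = fst (uzawa A B D S \<theta> f g x0 y0 i);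
         y = snd (uzawa A B D S \<theta> f g x0 y0 i);
         x' = x + matrix_inv A *v (f - (A *v x + B *v y));
         gi = transpose B *v x' - D *v y - g
     in (x', y + (\<theta> * tau (Hmat A B D) S gi) *\<^sub>R (matrix_inv S *v gi)))"

definition uzawa_res :: "real^'n^'n \<Rightarrow> real^'m^'n \<Rightarrow> real^'m^'m \<Rightarrow> real^'m^'m \<Rightarrow> real
    \<Rightarrow> real^'n \<Rightarrow> real^'m \<Rightarrow> real^'n \<Rightarrow> real^'m \<Rightarrow> nat \<Rightarrow> real^'m" where
  "uzawa_res A B D S \<theta> f g x0 y0 i =
     transpose B *v fst (uzawa A B D S \<theta> f g x0 y0 (Suc i)) - D *v snd (uzawa A B D S \<theta> f g x0 y0 i) - g"

end

theory Submission
  imports Defs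
begin

lemma minv_props:
  fixes X :: "real^'m^'m"
  assumes "invertible X"
  shows "X ** matrix_inv X = mat 1" "matrix_inv X ** X = mat 1"
proof -
  have "\<exists>A'. X ** A' = mat 1 \<and> A' ** X = mat 1" using assms unfolding invertible_def by blast
  hence "X ** matrix_inv X = mat 1 \<and> matrix_inv X ** X = mat 1"
    unfolding matrix_inv_def by (rule someI_ex)
  thus "X ** matrix_inv X = mat 1" "matrix_inv X ** X = mat 1" by auto
qed

lemma minv_vec:
  fixes X :: "real^'m^'m"
  assumes "invertible X"
  shows "X *v (matrix_inv X *v x) = x" "matrix_inv X *v (X *v x) = x"
  using minv_props[OF assms] by (simp_all add: matrix_vector_mul_assoc)

lemma inv_unique:
  fixes X Y :: "real^'m^'m"
  assumes "X ** Y = mat 1"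
  shows "matrix_inv X = Y"
proof -
  have YX: "Y ** X = mat 1" using assms matrix_left_right_inverse by blast
  have inv: "invertible X" unfolding invertible_def using assms YX by blast
  have "matrix_inv X = matrix_inv X ** (X ** Y)" using assms by simp
  also have "\<dots> = (matrix_inv X ** X) ** Y" by (simp add: matrix_mul_assoc)
  also have "\<dots> = Y" using minv_props[OF inv] by simp
  finally show ?thesis .
qed

lemma minv_minv:
  fixes X :: "real^'m^'m"
  assumes "invertible X"
  shows "matrix_inv (matrix_inv X) = X" "invertible (matrix_inv X)"
  using minv_props[OF assms] inv_unique invertible_def by blast+

lemma minv_sym:
  fixes X :: "real^'m^'m"
  assumes "invertible X" "transpose X = X"
  shows "transpose (matrix_inv X) = matrix_inv X"
proof -
  have "X ** transpose (matrix_inv X) = mat 1"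
    by (metis assms(2) matrix_transpose_mul minv_props(2)[OF assms(1)] transpose_mat)
  thus ?thesis using inv_unique by metis
qed

lemma sym_dot:
  fixes X :: "real^'m^'m"
  assumes "transpose X = X"
  shows "x \<bullet> (X *v y) = y \<bullet> (X *v x)"
  by (metis assms dot_lmul_matrix inner_commute transpose_matrix_vector)

lemma sym_from_dot:
  fixes X :: "real^'m^'m"
  assumes "\<And>x y. x \<bullet> (X *v y) = y \<bullet> (X *v x)"
  shows "transpose X = X"
proof -
  have "\<And>y. transpose X *v y = X *v y"
  proof -
    fix y
    have "\<And>x. x \<bullet> (transpose X *v y - X *v y) = 0"
    proof -
      fix x
      have "x \<bullet> (transpose X *v y) = y \<bullet> (X *v x)"
        by (metis dot_lmul_matrix inner_commute transpose_matrix_vector)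
      thus "x \<bullet> (transpose X *v y - X *v y) = 0" by (simp add: inner_diff_right assms)
    qed
    from this[of "transpose X *v y - X *v y"] show "transpose X *v y = X *v y" by simp
  qed
  thus ?thesis by (simp add: matrix_eq)
qed

lemma pd_invertible:
  fixes X :: "real^'m^'m"
  assumes "pos_def X"
  shows "invertible X"
proof -
  have "\<forall>x. X *v x = 0 \<longrightarrow> x = 0"
    using assms unfolding pos_def_def by (metis inner_zero_right less_irrefl)
  hence "\<exists>B. B ** X = mat 1" using matrix_left_invertible_ker by blast
  thus ?thesis using invertible_left_inverse by blast
qed

lemma pd_inv_pd:
  fixes X :: "real^'m^'m"
  assumes "pos_def X" "transpose X = X"
  shows "pos_def (matrix_inv X)" "transpose (matrix_inv X) = matrix_inv X"
proof -
  have inv: "invertible X" using pd_invertible assms by blast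
  show "transpose (matrix_inv X) = matrix_inv X" using minv_sym inv assms by blast
  show "pos_def (matrix_inv X)" unfolding pos_def_def
  proof (intro allI impI)
    fix z :: "real^'m" assume z: "z \<noteq> 0"
    define y where "y = matrix_inv X *v z"
    have zy: "z = X *v y" unfolding y_def using minv_vec[OF inv] by simp
    have "y \<noteq> 0" using z zy by auto
    hence "0 < y \<bullet> (X *v y)" using assms(1) unfolding pos_def_def by blast
    thus "0 < z \<bullet> (matrix_inv X *v z)" unfolding y_def[symmetric] zy by (simp add: inner_commute minv_vec[OF inv])
  qed
qed

lemma quad_cs:
  fixes A B C :: real
  assumes "\<And>t. 0 \<le> A + 2*t*B + t^2*C"
  shows "B^2 \<le> A*C"
proof (cases "C > 0")
  case True
  have "0 \<le> A + 2*(-B/C)*B + (-B/C)^2*C" by (rule assms)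
  also have "\<dots> = A - B^2/C" using True by (simp add: field_simps power2_eq_square)
  finally show ?thesis using True by (simp add: field_simps)
next
  case False
  have A0: "0 \<le> A" using assms[of 0] by simp
  show ?thesis
  proof (cases "C = 0")
    case True
    have "B = 0"
    proof (rule ccontr)
      assume "B \<noteq> 0"
      have "0 \<le> A + 2*(-(A+1)/(2*B))*B + (-(A+1)/(2*B))^2*C" by (rule assms)
      also have "\<dots> = -1" using True \<open>B \<noteq> 0\<close> by (simp add: field_simps)
      finally show False by simp
    qed
    thus ?thesis using True by simp
  next
    case False
    hence C: "C < 0" using \<open>\<not> C > 0\<close> by simp
    define t where "t = (2*\<bar>B\<bar> + A + 1) / (-C) + 1"
    have t1: "t \<ge> 1" using C A0 unfolding t_def by (simp add: field_simps)
    have "t * (-C) \<ge> 2*\<bar>B\<bar> + A + 1"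
    proof -
      have "t * (-C) = 2*\<bar>B\<bar> + A + 1 - C" using C unfolding t_def by (simp add: field_simps)
      thus ?thesis using C by simp
    qed
    hence "t * (t * (-C)) \<ge> t * (2*\<bar>B\<bar> + A + 1)" using t1 by (intro mult_left_mono) auto
    hence "t^2 * (-C) \<ge> t * (2*\<bar>B\<bar> + A + 1)" by (simp add: power2_eq_square algebra_simps)
    moreover have "t * (2*\<bar>B\<bar> + A + 1) > A + 2*t*B"
    proof -
      have "2*t*B \<le> 2*t*\<bar>B\<bar>" using t1 by (simp add: mult_left_mono)
      moreover have "A < t*(A+1)" proof -
        have "1*(A+1) \<le> t*(A+1)" using t1 A0 by (intro mult_right_mono) auto
        thus ?thesis by simp
      qed
      ultimately show ?thesis by (simp add: algebra_simps)
    qed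
    moreover have "0 \<le> A + 2*t*B + t^2*C" by (rule assms)
    ultimately show ?thesis by linarith
  qed
qed

lemma quad_expand:
  fixes Q :: "real^'m^'m"
  shows "(x + t *\<^sub>R y) \<bullet> (Q *v (x + t *\<^sub>R y)) =
    x \<bullet> (Q *v x) + t * (x \<bullet> (Q *v y) + y \<bullet> (Q *v x)) + t^2 * (y \<bullet> (Q *v y))"
  by (simp add: matrix_vector_right_distrib matrix_vector_mult_scaleR inner_add_left inner_add_right
      algebra_simps power2_eq_square)

lemma form_cs:
  fixes Q :: "real^'m^'m"
  assumes "transpose Q = Q" "\<And>z. 0 \<le> z \<bullet> (Q *v z)"
  shows "(x \<bullet> (Q *v y))^2 \<le> (x \<bullet> (Q *v x)) * (y \<bullet> (Q *v y))"
proof (rule quad_cs)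
  fix t
  have "0 \<le> (x + t *\<^sub>R y) \<bullet> (Q *v (x + t *\<^sub>R y))" by (rule assms(2))
  also have "\<dots> = x \<bullet> (Q *v x) + 2 * t * (x \<bullet> (Q *v y)) + t^2 * (y \<bullet> (Q *v y))"
    unfolding quad_expand using sym_dot[OF assms(1), of y x] by simp
  finally show "0 \<le> x \<bullet> (Q *v x) + 2 * t * (x \<bullet> (Q *v y)) + t^2 * (y \<bullet> (Q *v y))" .
qed

lemma cont_form:
  fixes P :: "real^'m^'m"
  shows "continuous_on S (\<lambda>y. y \<bullet> (P *v y))"
proof -
  have "continuous_on S (\<lambda>y. P *v y)"
    by (simp add: linear_continuous_on linear_conv_bounded_linear[symmetric])
  thus ?thesis by (intro continuous_intros)
qed

lemma Q_vec:
  fixes H P :: "real^'m^'m"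
  shows "(l *\<^sub>R H - P) *v z = l *\<^sub>R (H *v z) - P *v z"
  by (simp add: matrix_vector_mult_diff_rdistrib scaleR_matrix_vector_assoc)

lemma gen_max:
  fixes H P :: "real^'m^'m"
  assumes Hs: "transpose H = H" and Hp: "pos_def H" and Ps: "transpose P = P"
  shows "\<exists>l x. x \<noteq> 0 \<and> P *v x = l *\<^sub>R (H *v x) \<and> (\<forall>y. y \<bullet> (P *v y) \<le> l * (y \<bullet> (H *v y)))"
proof -
  define F where "F y = (y \<bullet> (P *v y)) / (y \<bullet> (H *v y))" for y :: "real^'m"
  have ne: "sphere (0::real^'m) 1 \<noteq> {}"
    using vector_choose_size[of 1] by auto
  have "continuous_on (sphere 0 1) F"
    unfolding F_def
  proof (intro continuous_on_divide cont_form ballI)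
    fix y :: "real^'m" assume "y \<in> sphere 0 1"
    hence "y \<noteq> 0" by auto
    thus "y \<bullet> (H *v y) \<noteq> 0" using Hp unfolding pos_def_def by force
  qed
  then obtain x0 where x0: "x0 \<in> sphere 0 1" and mx: "\<forall>y\<in>sphere 0 1. F y \<le> F x0"
    using continuous_attains_sup[OF compact_sphere ne] by blast
  define l where "l = F x0"
  have x0nz: "x0 \<noteq> 0" using x0 by auto
  have hx0: "0 < x0 \<bullet> (H *v x0)" using Hp x0nz unfolding pos_def_def by blast
  have bound: "y \<bullet> (P *v y) \<le> l * (y \<bullet> (H *v y))" for y
  proof (cases "y = 0")
    case True thus ?thesis by simp
  next
    case False
    define c where "c = 1 / norm y"
    have c0: "c \<noteq> 0" using False unfolding c_def by simp
    have "c *\<^sub>R y \<in> sphere 0 1" using False unfolding c_def by simp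
    hence "F (c *\<^sub>R y) \<le> l" using mx l_def by blast
    moreover have "F (c *\<^sub>R y) = F y" unfolding F_def using c0
      by (simp add: matrix_vector_mult_scaleR power2_eq_square)
    moreover have "0 < y \<bullet> (H *v y)" using Hp False unfolding pos_def_def by blast
    ultimately show ?thesis unfolding F_def by (simp add: divide_le_eq)
  qed
  define Q where "Q = l *\<^sub>R H - P"
  have Qs: "transpose Q = Q" unfolding Q_def using Hs Ps
    by (simp add: transpose_def vec_eq_iff)
  have Qp: "0 \<le> z \<bullet> (Q *v z)" for z
    using bound[of z] unfolding Q_def Q_vec by (simp add: inner_diff_right)
  have Q0: "x0 \<bullet> (Q *v x0) = 0"
    unfolding Q_def Q_vec l_def F_def using hx0 by (simp add: inner_diff_right)
  have "((Q *v x0) \<bullet> (Q *v x0))^2 \<le> ((Q *v x0) \<bullet> (Q *v (Q *v x0))) * (x0 \<bullet> (Q *v x0))"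
    using form_cs[OF Qs Qp] by (metis mult.commute)
  hence "Q *v x0 = 0" using Q0 by simp
  hence "P *v x0 = l *\<^sub>R (H *v x0)" unfolding Q_def Q_vec by simp
  thus ?thesis using x0nz bound by blast
qed

lemma spec_bounds:
  fixes H S :: "real^'m^'m"
  assumes Hs: "transpose H = H" and Hp: "pos_def H" and Ss: "transpose S = S" and Sp: "pos_def S"
  defines "E \<equiv> {l. real_eigenvalue (matrix_inv S ** H) l}"
  shows "\<exists>a b. 0 < a \<and> a \<le> b \<and> finite E \<and> Max E = b \<and> Min E = a \<and>
     (\<forall>y. a * (y \<bullet> (H *v y)) \<le> (H *v y) \<bullet> (matrix_inv S *v (H *v y)) \<and>
          (H *v y) \<bullet> (matrix_inv S *v (H *v y)) \<le> b * (y \<bullet> (H *v y)))"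
proof -
  define Si where "Si = matrix_inv S"
  define K where "K = Si ** H"
  define P where "P = H ** Si ** H"
  have Sis: "transpose Si = Si" and Sip: "pos_def Si" using pd_inv_pd[OF Sp Ss] Si_def by auto
  have Hinv: "invertible H" using pd_invertible[OF Hp] .
  have Ps: "transpose P = P" unfolding P_def by (simp add: matrix_transpose_mul Hs Sis matrix_mul_assoc)
  have Pv: "P *v y = H *v (Si *v (H *v y))" for y unfolding P_def by (simp add: matrix_vector_mul_assoc matrix_mul_assoc)
  have Kv: "K *v y = Si *v (H *v y)" for y unfolding K_def by (simp add: matrix_vector_mul_assoc)
  have form: "y \<bullet> (P *v y) = (H *v y) \<bullet> (Si *v (H *v y))" for y
    unfolding Pv using sym_dot[OF Hs, of y] inner_commute by metis
  have Hpos: "y \<noteq> 0 \<Longrightarrow> 0 < y \<bullet> (H *v y)" for y using Hp unfolding pos_def_def by blast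
  have eig_of: "K *v x = l *\<^sub>R x" if "P *v x = l *\<^sub>R (H *v x)" for x l
  proof -
    have "H *v (K *v x) = H *v (l *\<^sub>R x)" using that unfolding Pv Kv by (simp add: matrix_vector_mult_scaleR)
    hence "matrix_inv H *v (H *v (K *v x)) = matrix_inv H *v (H *v (l *\<^sub>R x))" by simp
    thus ?thesis using minv_vec(2)[OF Hinv] by simp
  qed
  have of_eig: "P *v x = l *\<^sub>R (H *v x)" if "K *v x = l *\<^sub>R x" for x l
    using that unfolding Pv Kv by (simp add: matrix_vector_mult_scaleR)
  obtain b xb where xb: "xb \<noteq> 0" "P *v xb = b *\<^sub>R (H *v xb)" and bb: "\<forall>y. y \<bullet> (P *v y) \<le> b * (y \<bullet> (H *v y))"
    using gen_max[OF Hs Hp Ps] by blast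
  have mPs: "transpose (-P) = -P" using Ps by (simp add: transpose_def vec_eq_iff)
  obtain l xa where xa: "xa \<noteq> 0" "(-P) *v xa = l *\<^sub>R (H *v xa)" and ab: "\<forall>y. y \<bullet> ((-P) *v y) \<le> l * (y \<bullet> (H *v y))"
    using gen_max[OF Hs Hp mPs] by blast
  define a where "a = -l"
  have mPv: "(-P) *v y = - (P *v y)" for y by (simp add: matrix_vector_mult_def vec_eq_iff sum_negf)
  have xa': "P *v xa = a *\<^sub>R (H *v xa)" using xa(2) unfolding a_def mPv by (metis minus_minus scaleR_minus_left)
  have ab': "a * (y \<bullet> (H *v y)) \<le> y \<bullet> (P *v y)" for y using ab[rule_format, of y] unfolding a_def mPv by simp
  have bE: "b \<in> E" unfolding E_def K_def[symmetric] Si_def[symmetric] real_eigenvalue_def using xb eig_of by blast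
  have aE: "a \<in> E" unfolding E_def K_def[symmetric] Si_def[symmetric] real_eigenvalue_def using xa xa' eig_of by blast
  have inE: "a \<le> l' \<and> l' \<le> b" if "l' \<in> E" for l'
  proof -
    have "real_eigenvalue K l'" using that unfolding E_def K_def Si_def by simp
    then obtain v where v: "v \<noteq> 0" "K *v v = l' *\<^sub>R v"
      unfolding real_eigenvalue_def by blast
    have "v \<bullet> (P *v v) = l' * (v \<bullet> (H *v v))" using of_eig[OF v(2)] by simp
    moreover have hp: "0 < v \<bullet> (H *v v)" using Hpos[OF v(1)] .
    ultimately have "l' * (v \<bullet> (H *v v)) \<le> b * (v \<bullet> (H *v v))" "a * (v \<bullet> (H *v v)) \<le> l' * (v \<bullet> (H *v v))"
      using bb[rule_format, of v] ab'[of v] by auto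
    thus ?thesis using hp mult_le_cancel_right_pos by blast
  qed
  have apos: "0 < a"
  proof -
    have "H *v xa \<noteq> 0"
    proof
      assume "H *v xa = 0"
      hence "matrix_inv H *v (H *v xa) = 0" by simp
      thus False using xa(1) minv_vec(2)[OF Hinv] by simp
    qed
    hence "0 < (H *v xa) \<bullet> (Si *v (H *v xa))" using Sip unfolding pos_def_def by blast
    hence "0 < a * (xa \<bullet> (H *v xa))" unfolding form[symmetric] xa' by simp
    thus ?thesis using Hpos[OF xa(1)] by (simp add: zero_less_mult_iff)
  qed
  have finE: "finite E"
  proof -
    define vec where "vec l' = (SOME v. v \<noteq> 0 \<and> K *v v = l' *\<^sub>R v)" for l'
    have vec: "vec l' \<noteq> 0 \<and> K *v vec l' = l' *\<^sub>R vec l'" if "l' \<in> E" for l'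
    proof -
      have "real_eigenvalue K l'" using that unfolding E_def K_def Si_def by simp
      hence "\<exists>v. v \<noteq> 0 \<and> K *v v = l' *\<^sub>R v" unfolding real_eigenvalue_def by blast
      thus ?thesis unfolding vec_def by (rule someI_ex)
    qed
    have orth: "vec l1 \<bullet> (H *v vec l2) = 0" if "l1 \<in> E" "l2 \<in> E" "l1 \<noteq> l2" for l1 l2
    proof -
      have "vec l1 \<bullet> (P *v vec l2) = l2 * (vec l1 \<bullet> (H *v vec l2))" using of_eig vec[OF that(2)] by simp
      moreover have "vec l2 \<bullet> (P *v vec l1) = l1 * (vec l2 \<bullet> (H *v vec l1))" using of_eig vec[OF that(1)] by simp
      moreover have "vec l1 \<bullet> (P *v vec l2) = vec l2 \<bullet> (P *v vec l1)" using sym_dot[OF Ps] by blast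
      moreover have "vec l1 \<bullet> (H *v vec l2) = vec l2 \<bullet> (H *v vec l1)" using sym_dot[OF Hs] by blast
      ultimately have "(l1 - l2) * (vec l1 \<bullet> (H *v vec l2)) = 0" by (simp add: algebra_simps)
      thus ?thesis using that(3) by simp
    qed
    have inj: "inj_on vec E"
    proof (rule inj_onI)
      fix l1 l2 assume "l1 \<in> E" "l2 \<in> E" "vec l1 = vec l2"
      show "l1 = l2"
      proof (rule ccontr)
        assume ne: "l1 \<noteq> l2"
        have "vec l1 \<bullet> (H *v vec l2) = 0" using orth \<open>l1 \<in> E\<close> \<open>l2 \<in> E\<close> ne by blast
        hence "vec l1 \<bullet> (H *v vec l1) = 0" using \<open>vec l1 = vec l2\<close> by simp
        moreover have "vec l1 \<noteq> 0" using vec \<open>l1 \<in> E\<close> by blast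
        ultimately show False using Hpos by force
      qed
    qed
    have "independent (vec ` E)"
      unfolding real_vector.independent_explicit_finite_subsets
    proof (intro allI impI ballI)
      fix T u w assume T: "T \<subseteq> vec ` E" "finite T" and su: "(\<Sum>v\<in>T. u v *\<^sub>R v) = 0" and w: "w \<in> T"
      have "0 = (\<Sum>v\<in>T. u v *\<^sub>R v) \<bullet> (H *v w)" using su by simp
      also have "\<dots> = (\<Sum>v\<in>T. u v * (v \<bullet> (H *v w)))" by (simp add: inner_sum_left)
      also have "\<dots> = u w * (w \<bullet> (H *v w))"
      proof -
        have "(\<Sum>v\<in>T. u v * (v \<bullet> (H *v w))) = (\<Sum>v\<in>T. if v = w then u w * (w \<bullet> (H *v w)) else 0)"
        proof (rule sum.cong[OF refl])
          fix v assume v: "v \<in> T"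
          show "u v * (v \<bullet> (H *v w)) = (if v = w then u w * (w \<bullet> (H *v w)) else 0)"
          proof (cases "v = w")
            case False
            obtain l1 l2 where "l1 \<in> E" "l2 \<in> E" "v = vec l1" "w = vec l2" using T v w by blast
            thus ?thesis using False orth by auto
          qed simp
        qed
        thus ?thesis using w T(2) by simp
      qed
      finally have "u w * (w \<bullet> (H *v w)) = 0" by simp
      moreover have "w \<noteq> 0"
      proof -
        obtain l where "l \<in> E" "w = vec l" using T(1) w by blast
        thus ?thesis using vec by simp
      qed
      hence "0 < w \<bullet> (H *v w)" using Hpos by blast
      ultimately show "u w = 0" by simp
    qed
    hence "finite (vec ` E)" using independent_bound by auto
    thus ?thesis using finite_image_iff[OF inj] by simp
  qed
  have "Max E = b" using finE bE inE by (intro Max_eqI) auto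
  moreover have "Min E = a" using finE aE inE by (intro Min_eqI) auto
  moreover have "a \<le> b" using inE aE by blast
  moreover have "\<forall>y. a * (y \<bullet> (H *v y)) \<le> (H *v y) \<bullet> (matrix_inv S *v (H *v y)) \<and>
          (H *v y) \<bullet> (matrix_inv S *v (H *v y)) \<le> b * (y \<bullet> (H *v y))"
  proof
    fix y
    show "a * (y \<bullet> (H *v y)) \<le> (H *v y) \<bullet> (matrix_inv S *v (H *v y)) \<and>
          (H *v y) \<bullet> (matrix_inv S *v (H *v y)) \<le> b * (y \<bullet> (H *v y))"
      using ab'[of y] bb[rule_format, of y] form[of y] unfolding Si_def by simp
  qed
  ultimately show ?thesis using apos finE by blast
qed


lemma real_ineq_final:
  fixes a b n c d :: real
  assumes "0 < a" "a \<le> b" "0 < n" "0 < d" "d \<le> (a+b)*c - a*b*n"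
  shows "n - c^2/d \<le> ((b-a)/(b+a))^2 * n"
proof -
  have ab: "0 < a + b" using assms by simp
  have k1: "4*a*b*n*d \<le> 4*a*b*n*((a+b)*c - a*b*n)"
    using assms by (intro mult_left_mono) auto
  have k2: "4*a*b*n*((a+b)*c - a*b*n) \<le> (a+b)^2*c^2"
  proof -
    have "0 \<le> ((a+b)*c - 2*a*b*n)^2" by simp
    thus ?thesis by (simp add: power2_eq_square algebra_simps)
  qed
  have key: "4*a*b*n*d \<le> (a+b)^2*c^2" using k1 k2 by linarith
  have "((b-a)/(b+a))^2 = (b-a)^2/(b+a)^2" by (simp add: power_divide)
  have "(n - c^2/d) * ((a+b)^2 * d) = (a+b)^2*n*d - (a+b)^2*c^2"
    using assms by (simp add: field_simps)
  also have "\<dots> \<le> (a+b)^2*n*d - 4*a*b*n*d" using key by linarith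
  also have "\<dots> = (b-a)^2 * n * d" by (simp add: power2_eq_square algebra_simps)
  also have "\<dots> = ((b-a)/(b+a))^2 * n * ((a+b)^2 * d)"
    using ab by (simp add: power_divide field_simps)
  finally have "(n - c^2/d) * ((a+b)^2 * d) \<le> ((b-a)/(b+a))^2 * n * ((a+b)^2 * d)" .
  moreover have "0 < (a+b)^2 * d" using ab assms by simp
  ultimately show ?thesis by (simp add: mult_le_cancel_right_pos)
qed

lemma kant:
  fixes H P :: "real^'m^'m" and e f :: "real^'m" and a b :: real
  assumes Hs: "transpose H = H" and Hp: "pos_def H" and Ps: "transpose P = P"
    and a0: "0 < a" and ab: "a \<le> b"
    and ray: "\<And>y. a * (y \<bullet> (H *v y)) \<le> y \<bullet> (P *v y) \<and> y \<bullet> (P *v y) \<le> b * (y \<bullet> (H *v y))"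
    and Pe: "P *v e = H *v f" and e0: "e \<noteq> 0"
  shows "(e - ((e \<bullet> (H *v f)) / (f \<bullet> (H *v f))) *\<^sub>R f) \<bullet> (H *v (e - ((e \<bullet> (H *v f)) / (f \<bullet> (H *v f))) *\<^sub>R f))
         \<le> ((b-a)/(b+a))^2 * (e \<bullet> (H *v e))"
proof -
  define n where "n = e \<bullet> (H *v e)"
  define c where "c = e \<bullet> (H *v f)"
  define d where "d = f \<bullet> (H *v f)"
  define t where "t = c / d"
  have n0: "0 < n" using Hp e0 unfolding pos_def_def n_def by blast
  have ce: "c = e \<bullet> (P *v e)" unfolding c_def Pe ..
  have fHe: "f \<bullet> (H *v e) = c" unfolding c_def using sym_dot[OF Hs] by metis
  have c0: "0 < c" using ray[of e] n0 a0 unfolding ce n_def[symmetric]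
    by (smt (verit) mult_pos_pos)
  have f0: "f \<noteq> 0" using c0 unfolding c_def by auto
  have d0: "0 < d" using Hp f0 unfolding pos_def_def d_def by blast
  define f' where "f' = f - a *\<^sub>R e"
  define Q where "Q = P - a *\<^sub>R H"
  have Qv: "Q *v z = P *v z - a *\<^sub>R (H *v z)" for z
    unfolding Q_def by (simp add: matrix_vector_mult_diff_rdistrib scaleR_matrix_vector_assoc)
  have Qs: "transpose Q = Q" unfolding Q_def using Hs Ps by (simp add: transpose_def vec_eq_iff)
  have Qp: "0 \<le> z \<bullet> (Q *v z)" for z using ray[of z] unfolding Qv by (simp add: inner_diff_right)
  have ePf: "e \<bullet> (P *v f) = d" unfolding d_def using sym_dot[OF Ps, of e f] Pe by simp
  define D where "D = f' \<bullet> (H *v f')"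
  have D_eq: "D = d - 2*a*c + a^2*n" unfolding D_def f'_def n_def d_def
    using fHe c_def by (simp add: inner_diff_left inner_diff_right matrix_vector_mult_diff_distrib
      matrix_vector_mult_scaleR algebra_simps power2_eq_square)
  have D0: "0 \<le> D" unfolding D_def using Hp unfolding pos_def_def
    by (metis inner_zero_left le_less matrix_vector_mult_0_right)
  have psi_ef: "e \<bullet> (Q *v f') = D" unfolding Qv D_eq f'_def
    using ePf ce c_def n_def by (simp add: inner_diff_right matrix_vector_mult_diff_distrib
      matrix_vector_mult_scaleR algebra_simps power2_eq_square)
  have psi_ee: "e \<bullet> (Q *v e) = c - a*n" unfolding Qv using ce n_def by (simp add: inner_diff_right)
  have psi_ff: "f' \<bullet> (Q *v f') \<le> (b - a) * D" unfolding Qv D_def using ray[of f']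
    by (simp add: inner_diff_right algebra_simps)
  have "D^2 \<le> (c - a*n) * (f' \<bullet> (Q *v f'))"
    using form_cs[OF Qs Qp, of e f'] psi_ef psi_ee by simp
  also have "\<dots> \<le> (c - a*n) * ((b - a) * D)"
    using psi_ff Qp[of e] psi_ee by (intro mult_left_mono) auto
  finally have DD: "D * D \<le> D * ((c - a*n) * (b - a))" by (simp add: power2_eq_square algebra_simps)
  have "D \<le> (c - a*n) * (b - a)"
  proof (cases "D = 0")
    case True thus ?thesis using Qp[of e] psi_ee ab by simp
  next
    case False thus ?thesis using DD D0 by (simp add: mult_le_cancel_left)
  qed
  hence dle: "d \<le> (a+b)*c - a*b*n" unfolding D_eq by (simp add: algebra_simps power2_eq_square)
  have "(e - t *\<^sub>R f) \<bullet> (H *v (e - t *\<^sub>R f)) = n - 2*t*c + t^2*d"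
    unfolding n_def d_def using fHe c_def
    by (simp add: inner_diff_left inner_diff_right matrix_vector_mult_diff_distrib
      matrix_vector_mult_scaleR algebra_simps power2_eq_square)
  also have "\<dots> = n - c^2/d" unfolding t_def using d0 by (simp add: field_simps power2_eq_square)
  also have "\<dots> \<le> ((b-a)/(b+a))^2 * n" using real_ineq_final[OF a0 ab n0 d0 dle] .
  finally show ?thesis unfolding t_def c_def d_def n_def .
qed

lemma complex_eig_real:
  fixes M H :: "real^'m^'m"
  assumes Hs: "transpose H = H" and Hp: "pos_def H"
    and Msym: "\<And>x y. (M *v x) \<bullet> (H *v y) = (M *v y) \<bullet> (H *v x)"
    and ev: "complex_eigenvalue M mu"
  shows "\<exists>p u. mu = complex_of_real p \<and> u \<noteq> 0 \<and> M *v u = p *\<^sub>R u"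
proof -
  obtain v :: "complex^'m" where v0: "v \<noteq> 0"
    and vv: "(\<chi> i. \<Sum>j\<in>UNIV. complex_of_real (M $ i $ j) * v $ j) = (\<chi> i. mu * v $ i)"
    using ev unfolding complex_eigenvalue_def by blast
  have eq: "(\<Sum>j\<in>UNIV. complex_of_real (M $ i $ j) * v $ j) = mu * v $ i" for i
    using vv by (simp add: vec_eq_iff)
  define u where "u = (\<chi> i. Re (v $ i))"
  define w where "w = (\<chi> i. Im (v $ i))"
  define p where "p = Re mu"
  define q where "q = Im mu"
  have Mu: "M *v u = p *\<^sub>R u - q *\<^sub>R w"
  proof -
    have "(M *v u) $ i = (p *\<^sub>R u - q *\<^sub>R w) $ i" for i
    proof -
      have "(M *v u) $ i = Re (\<Sum>j\<in>UNIV. complex_of_real (M $ i $ j) * v $ j)"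
        unfolding u_def by (simp add: matrix_vector_mult_def Re_sum)
      also have "\<dots> = Re (mu * v $ i)" using eq by simp
      finally show ?thesis unfolding u_def w_def p_def q_def by simp
    qed
    thus ?thesis by (simp add: vec_eq_iff)
  qed
  have Mw: "M *v w = q *\<^sub>R u + p *\<^sub>R w"
  proof -
    have "(M *v w) $ i = (q *\<^sub>R u + p *\<^sub>R w) $ i" for i
    proof -
      have "(M *v w) $ i = Im (\<Sum>j\<in>UNIV. complex_of_real (M $ i $ j) * v $ j)"
        unfolding w_def by (simp add: matrix_vector_mult_def Im_sum)
      also have "\<dots> = Im (mu * v $ i)" using eq by simp
      finally show ?thesis unfolding u_def w_def p_def q_def by (simp add: algebra_simps)
    qed
    thus ?thesis by (simp add: vec_eq_iff)
  qed
  have uw: "u \<bullet> (H *v w) = w \<bullet> (H *v u)" using sym_dot[OF Hs] by blast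
  have "(M *v u) \<bullet> (H *v w) = (M *v w) \<bullet> (H *v u)" by (rule Msym)
  hence "p * (u \<bullet> (H *v w)) - q * (w \<bullet> (H *v w)) = q * (u \<bullet> (H *v u)) + p * (w \<bullet> (H *v u))"
    unfolding Mu Mw by (simp add: inner_diff_left inner_add_left)
  hence qz: "q * (u \<bullet> (H *v u) + w \<bullet> (H *v w)) = 0" using uw by (simp add: algebra_simps)
  have uw0: "u \<noteq> 0 \<or> w \<noteq> 0"
  proof (rule ccontr)
    assume "\<not> (u \<noteq> 0 \<or> w \<noteq> 0)"
    hence "u = 0" "w = 0" by auto
    hence "v $ i = 0" for i unfolding u_def w_def by (simp add: vec_eq_iff complex_eq_iff)
    hence "v = 0" by (simp add: vec_eq_iff)
    thus False using v0 by simp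
  qed
  have Hnn: "0 \<le> z \<bullet> (H *v z)" for z using Hp unfolding pos_def_def
    by (metis inner_zero_left order_refl less_imp_le matrix_vector_mult_0_right)
  have "0 < u \<bullet> (H *v u) + w \<bullet> (H *v w)"
    using uw0 Hnn[of u] Hnn[of w] Hp unfolding pos_def_def by (meson add_pos_nonneg add_nonneg_pos)
  hence q0: "q = 0" using qz by simp
  have mu: "mu = complex_of_real p" using q0 unfolding p_def q_def by (simp add: complex_eq_iff)
  show ?thesis
  proof (cases "u = 0")
    case False thus ?thesis using mu Mu q0 by auto
  next
    case True thus ?thesis using mu Mw q0 uw0 by auto
  qed
qed

lemma refl_N:
  fixes H :: "real^'m^'m" and e r :: "real^'m" and \<beta> :: real
  assumes Hs: "transpose H = H" and Hp: "pos_def H" and b0: "0 \<le> \<beta>"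
    and rr: "r \<bullet> (H *v r) \<le> \<beta>^2 * (e \<bullet> (H *v e))"
  shows "\<exists>N. linear N \<and> N e = r \<and> (\<forall>x y. N x \<bullet> (H *v y) = N y \<bullet> (H *v x)) \<and>
             (\<forall>x. N x \<bullet> (H *v N x) \<le> \<beta>^2 * (x \<bullet> (H *v x)))"
proof -
  have Hnn: "0 \<le> z \<bullet> (H *v z)" for z using Hp unfolding pos_def_def
    by (metis inner_zero_left order_refl less_imp_le matrix_vector_mult_0_right)
  have Hz: "z \<bullet> (H *v z) = 0 \<Longrightarrow> z = 0" for z using Hp unfolding pos_def_def by force
  have Hsym: "x \<bullet> (H *v y) = y \<bullet> (H *v x)" for x y using sym_dot[OF Hs] by blast
  define ne where "ne = sqrt (e \<bullet> (H *v e))"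
  define nr where "nr = sqrt (r \<bullet> (H *v r))"
  define \<rho> where "\<rho> = nr / ne"
  define w where "w = nr *\<^sub>R e - ne *\<^sub>R r"
  define k where "k = 2 / (w \<bullet> (H *v w))"
  define N where "N x = \<rho> *\<^sub>R (x - (k * (w \<bullet> (H *v x))) *\<^sub>R w)" for x
  have ne0: "0 \<le> ne" "ne^2 = e \<bullet> (H *v e)" unfolding ne_def using Hnn by auto
  have nr0: "0 \<le> nr" "nr^2 = r \<bullet> (H *v r)" unfolding nr_def using Hnn by auto
  have nrle: "nr \<le> \<beta> * ne"
  proof -
    have "nr^2 \<le> (\<beta> * ne)^2" using rr ne0 nr0 by (simp add: power_mult_distrib)
    thus ?thesis using b0 ne0 power2_le_imp_le[of nr "\<beta> * ne"] by simp
  qed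
  have rho0: "0 \<le> \<rho>" "\<rho> \<le> \<beta>"
  proof -
    show "0 \<le> \<rho>" unfolding \<rho>_def using ne0 nr0 by simp
    show "\<rho> \<le> \<beta>"
    proof (cases "ne = 0")
      case True thus ?thesis unfolding \<rho>_def using b0 by simp
    next
      case False thus ?thesis unfolding \<rho>_def using nrle ne0 by (simp add: divide_le_eq mult.commute)
    qed
  qed
  have lin: "linear N"
    by (rule linearI) (simp_all add: N_def matrix_vector_right_distrib matrix_vector_mult_scaleR
      inner_add_right algebra_simps)
  have Nsym: "N x \<bullet> (H *v y) = N y \<bullet> (H *v x)" for x y
    unfolding N_def using Hsym[of x y] Hsym[of w x] Hsym[of w y]
    by (simp add: inner_diff_left algebra_simps)
  have iso: "(x - (k * (w \<bullet> (H *v x))) *\<^sub>R w) \<bullet> (H *v (x - (k * (w \<bullet> (H *v x))) *\<^sub>R w)) = x \<bullet> (H *v x)" for x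
  proof -
    define q1 where "q1 = w \<bullet> (H *v x)"
    define W where "W = w \<bullet> (H *v w)"
    have "(x - (k * q1) *\<^sub>R w) \<bullet> (H *v (x - (k * q1) *\<^sub>R w)) = x \<bullet> (H *v x) - 2 * k * q1 * q1 + k^2 * q1^2 * W"
      unfolding q1_def W_def using Hsym[of x w]
      by (simp add: inner_diff_left inner_diff_right matrix_vector_mult_diff_distrib
        matrix_vector_mult_scaleR algebra_simps power2_eq_square)
    also have "\<dots> = x \<bullet> (H *v x)"
    proof (cases "W = 0")
      case True thus ?thesis unfolding k_def W_def[symmetric] by simp
    next
      case False thus ?thesis unfolding k_def W_def[symmetric] by (simp add: field_simps power2_eq_square)
    qed
    finally show ?thesis unfolding q1_def .
  qed
  have Nnorm: "N x \<bullet> (H *v N x) \<le> \<beta>^2 * (x \<bullet> (H *v x))" for x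
  proof -
    have "N x \<bullet> (H *v N x) = \<rho>^2 * (x \<bullet> (H *v x))"
      unfolding N_def using iso[of x] by (simp add: matrix_vector_mult_scaleR power2_eq_square)
    also have "\<dots> \<le> \<beta>^2 * (x \<bullet> (H *v x))"
      using rho0 Hnn[of x] by (intro mult_right_mono[OF power_mono]) auto
    finally show ?thesis .
  qed
  have Ne: "N e = r"
  proof (cases "ne = 0")
    case True
    hence "e = 0" using ne0 Hz by simp
    hence "r \<bullet> (H *v r) \<le> 0" using rr by simp
    hence "r = 0" using Hnn[of r] Hz by (simp add: antisym)
    thus ?thesis using \<open>e = 0\<close> linear_0[OF lin] by simp
  next
    case nen: False
    show ?thesis
    proof (cases "nr = 0")
      case True
      hence "r = 0" using nr0 Hz by simp
      thus ?thesis unfolding N_def \<rho>_def using True by simp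
    next
      case nrn: False
      define C where "C = r \<bullet> (H *v e)"
      have erC: "e \<bullet> (H *v r) = C" unfolding C_def using Hsym by blast
      have WW: "w \<bullet> (H *v w) = 2 * ne * nr * (ne * nr - C)"
        unfolding w_def using erC C_def ne0(2)[symmetric] nr0(2)[symmetric]
        by (simp add: inner_diff_left inner_diff_right matrix_vector_mult_diff_distrib
          matrix_vector_mult_scaleR algebra_simps power2_eq_square)
      have WE: "w \<bullet> (H *v e) = ne * (ne * nr - C)"
        unfolding w_def using erC C_def ne0(2)[symmetric]
        by (simp add: inner_diff_left algebra_simps power2_eq_square)
      show ?thesis
      proof (cases "w \<bullet> (H *v w) = 0")
        case True
        hence "w = 0" using Hz by blast
        hence "nr *\<^sub>R e = ne *\<^sub>R r" unfolding w_def by simp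
        hence eqw: "ne *\<^sub>R r = nr *\<^sub>R e" by simp
        have "r = (1/ne) *\<^sub>R (ne *\<^sub>R r)" using nen by simp
        also have "\<dots> = (nr / ne) *\<^sub>R e" unfolding eqw by simp
        finally have "r = (nr / ne) *\<^sub>R e" .
        thus ?thesis unfolding N_def k_def \<rho>_def using True by simp
      next
        case False
        hence CC: "ne * nr - C \<noteq> 0" using WW by auto
        have "k * (w \<bullet> (H *v e)) = 1 / nr"
          unfolding k_def WW WE using CC nen nrn by (simp add: field_simps)
        hence "N e = \<rho> *\<^sub>R (e - (1/nr) *\<^sub>R w)" unfolding N_def by simp
        also have "e - (1/nr) *\<^sub>R w = (ne / nr) *\<^sub>R r"
          unfolding w_def using nrn by (simp add: algebra_simps)
        finally show ?thesis unfolding \<rho>_def using nen nrn by simp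
      qed
    qed
  qed
  show ?thesis using lin Ne Nsym Nnorm by blast
qed

lemma construct_G:
  fixes H :: "real^'m^'m" and e r :: "real^'m" and \<beta> \<theta> :: real
  assumes Hs: "transpose H = H" and Hp: "pos_def H" and b0: "0 \<le> \<beta>" and b1: "\<beta> < 1"
    and th: "0 < \<theta>" and rr: "r \<bullet> (H *v r) \<le> \<beta>^2 * (e \<bullet> (H *v e))"
  shows "\<exists>G :: real^'m^'m. transpose G = G \<and> pos_def G \<and> matrix_inv G *v (H *v e) = \<theta> *\<^sub>R (e - r) \<and>
     (\<forall>mu. complex_eigenvalue (matrix_inv G ** H) mu \<longrightarrow>
        (\<exists>x. mu = complex_of_real x \<and> \<theta> * (1 - \<beta>) \<le> x \<and> x \<le> \<theta> * (1 + \<beta>)))"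
proof -
  obtain N where lN: "linear N" and Ne: "N e = r" and Nsym: "\<And>x y. N x \<bullet> (H *v y) = N y \<bullet> (H *v x)"
    and Nn: "\<And>x. N x \<bullet> (H *v N x) \<le> \<beta>^2 * (x \<bullet> (H *v x))"
    using refl_N[OF Hs Hp b0 rr] by blast
  have Hnn: "0 \<le> z \<bullet> (H *v z)" for z using Hp unfolding pos_def_def
    by (metis inner_zero_left order_refl less_imp_le matrix_vector_mult_0_right)
  have Hsym: "x \<bullet> (H *v y) = y \<bullet> (H *v x)" for x y using sym_dot[OF Hs] by blast
  have Hinv: "invertible H" using pd_invertible[OF Hp] .
  define Mf where "Mf x = \<theta> *\<^sub>R (x - N x)" for x
  have lM: "linear Mf"
    by (rule linearI) (simp_all add: Mf_def linear_add[OF lN] linear_scale[OF lN] algebra_simps)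
  define Mm where "Mm = matrix Mf"
  have Mv: "Mm *v x = Mf x" for x unfolding Mm_def using matrix_vector_mul(2)[OF lM] by metis
  have Msym: "Mf x \<bullet> (H *v y) = Mf y \<bullet> (H *v x)" for x y
    unfolding Mf_def using Hsym[of x y] Nsym[of x y] by (simp add: inner_diff_left)
  have Mpos: "\<theta> * (1 - \<beta>) * (x \<bullet> (H *v x)) \<le> Mf x \<bullet> (H *v x)" for x
  proof -
    define p where "p = N x \<bullet> (H *v x)"
    define n where "n = x \<bullet> (H *v x)"
    have n0: "0 \<le> n" unfolding n_def by (rule Hnn)
    have "p^2 \<le> (N x \<bullet> (H *v N x)) * n" unfolding p_def n_def by (rule form_cs[OF Hs Hnn])
    also have "\<dots> \<le> (\<beta>^2 * n) * n" using Nn[of x] n0 unfolding n_def by (rule mult_right_mono)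
    also have "\<dots> = (\<beta> * n)^2" by (simp add: power2_eq_square)
    finally have "\<bar>p\<bar>^2 \<le> (\<beta> * n)^2" by simp
    hence "\<bar>p\<bar> \<le> \<beta> * n" using power2_le_imp_le[of "\<bar>p\<bar>" "\<beta> * n"] b0 n0 by simp
    hence "p \<le> \<beta> * n" by simp
    hence "\<theta> * ((1 - \<beta>) * n) \<le> \<theta> * (n - p)" using th by (simp add: algebra_simps)
    moreover have "Mf x \<bullet> (H *v x) = \<theta> * (n - p)" unfolding Mf_def p_def n_def by (simp add: inner_diff_left)
    ultimately show ?thesis unfolding n_def[symmetric] by (simp add: algebra_simps)
  qed
  define Hi where "Hi = matrix_inv H"
  have HHi: "H *v (Hi *v x) = x" "Hi *v (H *v x) = x" for x unfolding Hi_def using minv_vec[OF Hinv] by auto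
  define Ginv where "Ginv = Mm ** Hi"
  have Gv: "Ginv *v y = Mf (Hi *v y)" for y unfolding Ginv_def by (simp add: matrix_vector_mul_assoc[symmetric] Mv)
  have Gsym: "transpose Ginv = Ginv"
  proof (rule sym_from_dot)
    fix x y
    have "x \<bullet> (Ginv *v y) = (H *v (Hi *v x)) \<bullet> Mf (Hi *v y)" unfolding Gv HHi ..
    also have "\<dots> = Mf (Hi *v y) \<bullet> (H *v (Hi *v x))" by (rule inner_commute)
    also have "\<dots> = Mf (Hi *v x) \<bullet> (H *v (Hi *v y))" by (rule Msym)
    also have "\<dots> = y \<bullet> (Ginv *v x)" unfolding Gv HHi by (rule inner_commute)
    finally show "x \<bullet> (Ginv *v y) = y \<bullet> (Ginv *v x)" .
  qed
  have Gpd: "pos_def Ginv" unfolding pos_def_def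
  proof (intro allI impI)
    fix x :: "real^'m" assume x0: "x \<noteq> 0"
    define x' where "x' = Hi *v x"
    have "x' \<noteq> 0" using x0 HHi(1)[of x] unfolding x'_def by auto
    hence "0 < x' \<bullet> (H *v x')" using Hp unfolding pos_def_def by blast
    moreover have "0 < \<theta> * (1 - \<beta>)" using th b1 by simp
    ultimately have "0 < \<theta> * (1 - \<beta>) * (x' \<bullet> (H *v x'))" by simp
    also have "\<dots> \<le> Mf x' \<bullet> (H *v x')" by (rule Mpos)
    also have "\<dots> = x \<bullet> (Ginv *v x)" unfolding Gv x'_def HHi by (rule inner_commute)
    finally show "0 < x \<bullet> (Ginv *v x)" .
  qed
  have Ginvi: "invertible Ginv" using pd_invertible[OF Gpd] .
  define G where "G = matrix_inv Ginv"
  have iG: "matrix_inv G = Ginv" unfolding G_def using minv_minv(1)[OF Ginvi] .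
  have G1: "transpose G = G" unfolding G_def using minv_sym[OF Ginvi Gsym] .
  have G2: "pos_def G" unfolding G_def using pd_inv_pd(1)[OF Gpd Gsym] .
  have G3: "matrix_inv G *v (H *v e) = \<theta> *\<^sub>R (e - r)" unfolding iG Gv HHi Mf_def Ne ..
  have GH: "matrix_inv G ** H = Mm"
  proof -
    have "Hi ** H = mat 1" unfolding Hi_def using minv_props(2)[OF Hinv] .
    thus ?thesis unfolding iG Ginv_def by (metis matrix_mul_assoc matrix_mul_rid)
  qed
  have G4: "\<forall>mu. complex_eigenvalue (matrix_inv G ** H) mu \<longrightarrow>
        (\<exists>x. mu = complex_of_real x \<and> \<theta> * (1 - \<beta>) \<le> x \<and> x \<le> \<theta> * (1 + \<beta>))"
  proof (intro allI impI)
    fix mu assume "complex_eigenvalue (matrix_inv G ** H) mu"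
    hence ev: "complex_eigenvalue Mm mu" unfolding GH .
    have Ms: "(Mm *v x) \<bullet> (H *v y) = (Mm *v y) \<bullet> (H *v x)" for x y unfolding Mv by (rule Msym)
    obtain p u where mu: "mu = complex_of_real p" and u0: "u \<noteq> 0" and Mu: "Mm *v u = p *\<^sub>R u"
      using complex_eig_real[OF Hs Hp Ms ev] by blast
    define l where "l = 1 - p / \<theta>"
    have "\<theta> *\<^sub>R (u - N u) = p *\<^sub>R u" using Mu unfolding Mv Mf_def .
    hence "u - N u = (p / \<theta>) *\<^sub>R u" using th by (metis divide_inverse_commute inverse_eq_divide
        mult.commute scaleR_scaleR scaleR_one right_inverse less_irrefl)
    hence Nu: "N u = l *\<^sub>R u" unfolding l_def by (simp add: algebra_simps)
    have hu: "0 < u \<bullet> (H *v u)" using Hp u0 unfolding pos_def_def by blast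
    have "l^2 * (u \<bullet> (H *v u)) \<le> \<beta>^2 * (u \<bullet> (H *v u))"
      using Nn[of u] unfolding Nu by (simp add: matrix_vector_mult_scaleR power2_eq_square)
    hence "l^2 \<le> \<beta>^2" using hu by (simp add: mult_le_cancel_right_pos)
    hence "\<bar>l\<bar>^2 \<le> \<beta>^2" by simp
    hence "\<bar>l\<bar> \<le> \<beta>" using power2_le_imp_le[of "\<bar>l\<bar>" \<beta>] b0 by simp
    hence "1 - \<beta> \<le> p / \<theta>" "p / \<theta> \<le> 1 + \<beta>" unfolding l_def by auto
    hence "\<theta> * (1 - \<beta>) \<le> p" "p \<le> \<theta> * (1 + \<beta>)" using th by (simp_all add: field_simps)
    thus "\<exists>x. mu = complex_of_real x \<and> \<theta> * (1 - \<beta>) \<le> x \<and> x \<le> \<theta> * (1 + \<beta>)" using mu by blast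
  qed
  show ?thesis using G1 G2 G3 G4 by blast
qed

theorem lemma2p2:
  fixes A :: "real^'n^'n" and B :: "real^'m^'n" and D S :: "real^'m^'m"
    and \<theta> :: real and f x0 :: "real^'n" and g y0 :: "real^'m" and i :: nat
  assumes "CARD('m) \<le> CARD('n)"
    and "invertible A"
    and "pos_def (sym_part A)"
    and "transpose D = D" and "pos_semidef D"
    and "invertible (transpose B ** matrix_inv A ** B + D)"
    and "transpose (Hmat A B D) = Hmat A B D" and "pos_def (Hmat A B D)"
    and "transpose S = S" and "pos_def S"
    and "\<theta> > 0"
  shows "let H = Hmat A B D;
             \<kappa>1 = spec_cond (matrix_inv S ** H);
             \<beta>1 = (\<kappa>1 - 1) / (\<kappa>1 + 1);
             gi = uzawa_res A B D S \<theta> f g x0 y0 i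
         in \<exists>G :: real^'m^'m. transpose G = G \<and> pos_def G \<and>
              matrix_inv G *v gi = (\<theta> * tau H S gi) *\<^sub>R (matrix_inv S *v gi) \<and>
              (\<forall>mu. complex_eigenvalue (matrix_inv G ** H) mu \<longrightarrow>
                 (\<exists>r. mu = complex_of_real r \<and> \<theta> * (1 - \<beta>1) \<le> r \<and> r \<le> \<theta> * (1 + \<beta>1)))"
proof -
  define H where "H = Hmat A B D"
  define gi where "gi = uzawa_res A B D S \<theta> f g x0 y0 i"
  define \<kappa>1 where "\<kappa>1 = spec_cond (matrix_inv S ** H)"
  define \<beta>1 where "\<beta>1 = (\<kappa>1 - 1) / (\<kappa>1 + 1)"
  have Hs: "transpose H = H" and Hp: "pos_def H" unfolding H_def using assms by auto
  have Ss: "transpose S = S" and Sp: "pos_def S" using assms by auto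
  have th: "0 < \<theta>" using assms by simp
  obtain a b where a0: "0 < a" and ab: "a \<le> b" and finE: "finite {l. real_eigenvalue (matrix_inv S ** H) l}"
    and MaxE: "Max {l. real_eigenvalue (matrix_inv S ** H) l} = b"
    and MinE: "Min {l. real_eigenvalue (matrix_inv S ** H) l} = a"
    and ray0: "\<forall>y. a * (y \<bullet> (H *v y)) \<le> (H *v y) \<bullet> (matrix_inv S *v (H *v y)) \<and>
          (H *v y) \<bullet> (matrix_inv S *v (H *v y)) \<le> b * (y \<bullet> (H *v y))"
    using spec_bounds[OF Hs Hp Ss Sp] by blast
  have k1: "\<kappa>1 = b / a" unfolding \<kappa>1_def spec_cond_def MaxE MinE ..
  have b1: "\<beta>1 = (b - a) / (b + a)"
  proof -
    have q1: "b/a - 1 = (b-a)/a" "b/a + 1 = (b+a)/a" using a0 by (simp_all add: field_simps)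
    show ?thesis unfolding \<beta>1_def k1 q1 using a0 by simp
  qed
  have b1_0: "0 \<le> \<beta>1" and b1_1: "\<beta>1 < 1" unfolding b1 using a0 ab by (simp_all add: field_simps)
  define Si where "Si = matrix_inv S"
  define P where "P = H ** Si ** H"
  have Sis: "transpose Si = Si" using pd_inv_pd[OF Sp Ss] Si_def by auto
  have Hinv: "invertible H" using pd_invertible[OF Hp] .
  have Ps: "transpose P = P" unfolding P_def by (simp add: matrix_transpose_mul Hs Sis matrix_mul_assoc)
  have Pv: "P *v y = H *v (Si *v (H *v y))" for y unfolding P_def by (simp add: matrix_vector_mul_assoc matrix_mul_assoc)
  have form: "y \<bullet> (P *v y) = (H *v y) \<bullet> (Si *v (H *v y))" for y
    unfolding Pv using sym_dot[OF Hs, of y] inner_commute by metis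
  have ray: "a * (y \<bullet> (H *v y)) \<le> y \<bullet> (P *v y) \<and> y \<bullet> (P *v y) \<le> b * (y \<bullet> (H *v y))" for y
    unfolding form Si_def using ray0 by blast
  define e where "e = matrix_inv H *v gi"
  have He: "H *v e = gi" unfolding e_def using minv_vec(1)[OF Hinv] .
  define fv where "fv = Si *v gi"
  have Pe: "P *v e = H *v fv" unfolding Pv He fv_def ..
  define r where "r = e - tau H S gi *\<^sub>R fv"
  have rr: "r \<bullet> (H *v r) \<le> \<beta>1^2 * (e \<bullet> (H *v e))"
  proof (cases "gi = 0")
    case True
    hence "e = 0" "fv = 0" unfolding e_def fv_def by simp_all
    thus ?thesis unfolding r_def by simp
  next
    case False
    hence e0: "e \<noteq> 0" using He by auto
    have t: "tau H S gi = (e \<bullet> (H *v fv)) / (fv \<bullet> (H *v fv))"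
    proof -
      have "gi \<bullet> (matrix_inv S *v gi) = e \<bullet> (H *v fv)"
        unfolding fv_def Si_def He[symmetric] using sym_dot[OF Hs, of e] inner_commute by metis
      moreover have "(H *v (matrix_inv S *v gi)) \<bullet> (matrix_inv S *v gi) = fv \<bullet> (H *v fv)"
        unfolding fv_def Si_def by (rule inner_commute)
      ultimately show ?thesis unfolding tau_def using False by simp
    qed
    show ?thesis unfolding r_def t b1 using kant[OF Hs Hp Ps a0 ab ray Pe e0] .
  qed
  obtain G :: "real^'m^'m" where G1: "transpose G = G" and G2: "pos_def G"
    and G3: "matrix_inv G *v (H *v e) = \<theta> *\<^sub>R (e - r)"
    and G4: "\<forall>mu. complex_eigenvalue (matrix_inv G ** H) mu \<longrightarrow>
        (\<exists>x. mu = complex_of_real x \<and> \<theta> * (1 - \<beta>1) \<le> x \<and> x \<le> \<theta> * (1 + \<beta>1))"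
    using construct_G[OF Hs Hp b1_0 b1_1 th rr] by blast
  have "matrix_inv G *v gi = (\<theta> * tau H S gi) *\<^sub>R (matrix_inv S *v gi)"
    using G3 unfolding He r_def fv_def Si_def by simp
  hence "\<exists>G :: real^'m^'m. transpose G = G \<and> pos_def G \<and>
              matrix_inv G *v gi = (\<theta> * tau H S gi) *\<^sub>R (matrix_inv S *v gi) \<and>
              (\<forall>mu. complex_eigenvalue (matrix_inv G ** H) mu \<longrightarrow>
                 (\<exists>r. mu = complex_of_real r \<and> \<theta> * (1 - \<beta>1) \<le> r \<and> r \<le> \<theta> * (1 + \<beta>1)))"
    using G1 G2 G4 by blast
  thus ?thesis unfolding Let_def H_def[symmetric] gi_def[symmetric] \<kappa>1_def[symmetric] \<beta>1_def[symmetric] .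
qed

end
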